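(* Suppose that a topological group $G$ has exactly $m$ elements of order $p$, for some integer $m\ge 1$ and some prime number $p$. Let $k\ge 1$ be an integer. Then a space $X$ has precisely $k$ connected components if and only if $C_p(X,G)$ has exactly $(m+1)^{k}-1$ elements of order $p$.
   Context: All spaces are Tychonoff and non-empty; topological groups are Hausdorff. $C_p(X,G)$ is the group of continuous maps $X\to G$ with pointwise operations and the topology of pointwise convergence. The order of an element $g$ is the least $n\ge1$ with $g^n=e$. *)

theory Defs
  imports "HOL-Analysis.Analysis" "HOL-Algebra.Multiplicative_Group"
begin

definition topological_group :: "('g, 'b) monoid_scheme \<Rightarrow> 'g topology \<Rightarrow> bool" where
  "topological_group G T \<longleftrightarrow>
     group G \<and> topspace T = carrier G \<and>
     continuous_map (prod_topology T T) T (\<lambda>(x, y). x \<otimes>\<^bsub>G\<^esub> y) \<and>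
     continuous_map T T (\<lambda>x. inv\<^bsub>G\<^esub> x) \<and>
     Hausdorff_space T"

definition tychonoff_space :: "'a topology \<Rightarrow> bool" where
  "tychonoff_space X \<longleftrightarrow> completely_regular_space X \<and> Hausdorff_space X"

text \<open>The group underlying C_p(X,G): continuous maps X -> G (taken extensional on the
carrier of X, so that distinct elements are distinct functions on topspace X), with
pointwise operations. The topology of pointwise convergence is irrelevant for the
group-theoretic statement.\<close>
definition Cp_group :: "'a topology \<Rightarrow> ('g, 'b) monoid_scheme \<Rightarrow> 'g topology \<Rightarrow> ('a \<Rightarrow> 'g) monoid" where
  "Cp_group X G T =
     \<lparr> carrier = {f. continuous_map X T f \<and> f \<in> extensional (topspace X)},
       mult = (\<lambda>f g. \<lambda>x\<in>topspace X. f x \<otimes>\<^bsub>G\<^esub> g x),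
       one = (\<lambda>x\<in>topspace X. \<one>\<^bsub>G\<^esub>) \<rparr>"

definition elements_of_order :: "('g, 'b) monoid_scheme \<Rightarrow> nat \<Rightarrow> 'g set" where
  "elements_of_order G n = {g \<in> carrier G. group.ord G g = n}"

end

theory Submission
  imports Defs
begin

lemma (in group) ord_prime_iff:
  assumes "prime p" "x \<in> carrier G"
  shows "ord x = p \<longleftrightarrow> x [^] p = \<one> \<and> x \<noteq> \<one>"
proof
  assume h: "ord x = p"
  have "x [^] p = \<one>" using h assms pow_eq_id by auto
  moreover have "x \<noteq> \<one>"
  proof
    assume "x = \<one>"
    then have "x [^] (1::nat) = \<one>" by simp
    then have "ord x dvd 1" by (rule pow_eq_id[OF assms(2), THEN iffD1])
    then have "p dvd 1" using h by simp
    then show False using assms(1) by simp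
  qed
  ultimately show "x [^] p = \<one> \<and> x \<noteq> \<one>" by simp
next
  assume h: "x [^] p = \<one> \<and> x \<noteq> \<one>"
  then have d: "ord x dvd p" using pow_eq_id[OF assms(2)] by simp
  have "ord x \<noteq> 1"
  proof
    assume "ord x = 1"
    then have "x [^] (1::nat) = \<one>" using pow_eq_id[OF assms(2), of 1] by simp
    then show False using h assms(2) by simp
  qed
  then show "ord x = p" using d assms(1) prime_nat_iff by auto
qed

lemma Cp_group_is_group:
  assumes tg: "topological_group G T"
  shows "group (Cp_group X G T)"
proof -
  have gG: "group G" and tT: "topspace T = carrier G"
    and cm: "continuous_map (prod_topology T T) T (\<lambda>(x, y). x \<otimes>\<^bsub>G\<^esub> y)"
    and ci: "continuous_map T T (\<lambda>x. inv\<^bsub>G\<^esub> x)"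
    using tg by (simp_all add: topological_group_def)
  interpret G: group G by (rule gG)
  have val: "f x \<in> carrier G" if "continuous_map X T f" "x \<in> topspace X" for f x
    using that tT by (simp add: continuous_map_def Pi_iff)
  have mulc: "continuous_map X T (\<lambda>x. f x \<otimes>\<^bsub>G\<^esub> g x)"
    if "continuous_map X T f" "continuous_map X T g" for f g
  proof -
    have "continuous_map X T ((\<lambda>(x, y). x \<otimes>\<^bsub>G\<^esub> y) \<circ> (\<lambda>x. (f x, g x)))"
      by (rule continuous_map_compose[OF continuous_map_pairedI[OF that] cm])
    then show ?thesis by (simp add: o_def)
  qed
  show ?thesis
  proof (rule groupI)
    fix f g assume f: "f \<in> carrier (Cp_group X G T)" and g: "g \<in> carrier (Cp_group X G T)"
    have "continuous_map X T (\<lambda>x. f x \<otimes>\<^bsub>G\<^esub> g x)"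
      using mulc[of f g] f g by (simp add: Cp_group_def)
    then have "continuous_map X T (\<lambda>x\<in>topspace X. f x \<otimes>\<^bsub>G\<^esub> g x)"
      by (rule continuous_map_eq) simp
    then show "f \<otimes>\<^bsub>Cp_group X G T\<^esub> g \<in> carrier (Cp_group X G T)"
      by (simp add: Cp_group_def)
  next
    have "continuous_map X T (\<lambda>x. \<one>\<^bsub>G\<^esub>)" using tT by simp
    then have "continuous_map X T (\<lambda>x\<in>topspace X. \<one>\<^bsub>G\<^esub>)"
      by (rule continuous_map_eq) simp
    then show "\<one>\<^bsub>Cp_group X G T\<^esub> \<in> carrier (Cp_group X G T)"
      by (simp add: Cp_group_def)
  next
    fix f g h assume f: "f \<in> carrier (Cp_group X G T)" and g: "g \<in> carrier (Cp_group X G T)"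
      and h: "h \<in> carrier (Cp_group X G T)"
    show "f \<otimes>\<^bsub>Cp_group X G T\<^esub> g \<otimes>\<^bsub>Cp_group X G T\<^esub> h =
          f \<otimes>\<^bsub>Cp_group X G T\<^esub> (g \<otimes>\<^bsub>Cp_group X G T\<^esub> h)"
    proof -
      have fc: "continuous_map X T f" "continuous_map X T g" "continuous_map X T h"
        using f g h by (simp_all add: Cp_group_def)
      show ?thesis unfolding Cp_group_def monoid.simps
      proof (rule restrict_ext)
        fix x assume x: "x \<in> topspace X"
        then show "(\<lambda>x\<in>topspace X. f x \<otimes>\<^bsub>G\<^esub> g x) x \<otimes>\<^bsub>G\<^esub> h x =
          f x \<otimes>\<^bsub>G\<^esub> (\<lambda>x\<in>topspace X. g x \<otimes>\<^bsub>G\<^esub> h x) x"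
          using val[OF fc(1) x] val[OF fc(2) x] val[OF fc(3) x] by (simp add: G.m_assoc)
      qed
    qed
  next
    fix f assume f: "f \<in> carrier (Cp_group X G T)"
    show "\<one>\<^bsub>Cp_group X G T\<^esub> \<otimes>\<^bsub>Cp_group X G T\<^esub> f = f"
    proof -
      have fc: "continuous_map X T f" and fe: "f \<in> extensional (topspace X)"
        using f by (simp_all add: Cp_group_def)
      show ?thesis unfolding Cp_group_def monoid.simps
      proof (rule extensionalityI[OF _ fe])
        fix x assume x: "x \<in> topspace X"
        then show "(\<lambda>x\<in>topspace X. (\<lambda>x\<in>topspace X. \<one>\<^bsub>G\<^esub>) x \<otimes>\<^bsub>G\<^esub> f x) x = f x"
          using val[OF fc x] by simp
      qed simp
    qed
  next
    fix f assume f: "f \<in> carrier (Cp_group X G T)"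
    have fc: "continuous_map X T f" using f by (simp add: Cp_group_def)
    have "continuous_map X T (\<lambda>x. inv\<^bsub>G\<^esub> f x)"
      using continuous_map_compose[OF fc ci] by (simp add: o_def)
    then have "continuous_map X T (\<lambda>x\<in>topspace X. inv\<^bsub>G\<^esub> f x)"
      by (rule continuous_map_eq) simp
    then have "(\<lambda>x\<in>topspace X. inv\<^bsub>G\<^esub> f x) \<in> carrier (Cp_group X G T)"
      by (simp add: Cp_group_def)
    moreover have "(\<lambda>x\<in>topspace X. inv\<^bsub>G\<^esub> f x) \<otimes>\<^bsub>Cp_group X G T\<^esub> f = \<one>\<^bsub>Cp_group X G T\<^esub>"
      unfolding Cp_group_def monoid.simps
    proof (rule restrict_ext)
      fix x assume x: "x \<in> topspace X"
      then show "(\<lambda>x\<in>topspace X. inv\<^bsub>G\<^esub> f x) x \<otimes>\<^bsub>G\<^esub> f x = \<one>\<^bsub>G\<^esub>"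
        using val[OF fc x] by simp
    qed
    ultimately show "\<exists>y\<in>carrier (Cp_group X G T). y \<otimes>\<^bsub>Cp_group X G T\<^esub> f = \<one>\<^bsub>Cp_group X G T\<^esub>"
      by blast
  qed
qed

lemma Cp_pow:
  assumes "f \<in> extensional (topspace X)"
  shows "f [^]\<^bsub>Cp_group X G T\<^esub> (n::nat) = (\<lambda>x\<in>topspace X. f x [^]\<^bsub>G\<^esub> n)"
  by (induct n) (auto simp: Cp_group_def fun_eq_iff)


lemma continuous_map_discrete_iff:
  "continuous_map X (discrete_topology S) f \<longleftrightarrow>
     (\<forall>x\<in>topspace X. f x \<in> S) \<and> (\<forall>U. U \<subseteq> S \<longrightarrow> openin X {x \<in> topspace X. f x \<in> U})"
  by (simp add: continuous_map_def Pi_iff)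

lemma component_eq_of_mem:
  assumes "C \<in> connected_components_of X" "x \<in> C"
  shows "connected_component_of_set X x = C"
proof -
  obtain a where a: "a \<in> topspace X" "C = connected_component_of_set X a"
    using assms(1) by (auto simp: connected_components_of_def)
  then have "connected_component_of X a x" using assms(2) by simp
  then have "connected_component_of X a = connected_component_of X x"
    using connected_component_of_equiv by metis
  then show ?thesis using a by simp
qed

lemma count_finite_components:
  fixes X :: "'a topology" and S :: "'b set"
  assumes fin: "finite (connected_components_of X)" and finS: "finite S"
  defines "Q \<equiv> {f. continuous_map X (discrete_topology S) f \<and> f \<in> extensional (topspace X)}"
  shows "finite Q \<and> card Q = card S ^ card (connected_components_of X)"
proof -
  let ?C = "connected_components_of X"
  define \<Phi> where "\<Phi> f = (\<lambda>C\<in>?C. f (SOME x. x \<in> C))" for f :: "'a \<Rightarrow> 'b"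
  define \<Psi> where "\<Psi> g = (\<lambda>x\<in>topspace X. g (connected_component_of_set X x))" for g :: "'a set \<Rightarrow> 'b"
  have const: "f x = f y" if "f \<in> Q" "C \<in> ?C" "x \<in> C" "y \<in> C" for f C x y
  proof -
    have "connectedin (discrete_topology S) (f ` C)"
    proof (rule connectedin_continuous_map_image)
      show "continuous_map X (discrete_topology S) f" using that(1) by (simp add: Q_def)
      show "connectedin X C" by (rule connectedin_connected_components_of[OF that(2)])
    qed
    then have "\<exists>a. f ` C \<subseteq> {a}" by (simp add: connectedin_discrete_topology)
    then obtain a where "f ` C \<subseteq> {a}" by blast
    then show ?thesis using that by auto
  qed
  have compx: "connected_component_of_set X x \<in> ?C" if "x \<in> topspace X" for x
    using that by (simp add: connected_component_in_connected_components_of)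
  have xin: "x \<in> connected_component_of_set X x" if "x \<in> topspace X" for x
    using that by (simp add: connected_component_of_refl)
  have some: "(SOME x. x \<in> C) \<in> C" if "C \<in> ?C" for C
    using nonempty_connected_components_of[OF that] by (simp add: some_in_eq)
  have bij: "bij_betw \<Phi> Q (PiE ?C (\<lambda>_. S))"
  proof (rule bij_betw_byWitness[where f' = \<Psi>])
    show "\<forall>f\<in>Q. \<Psi> (\<Phi> f) = f"
    proof
      fix f assume f: "f \<in> Q"
      show "\<Psi> (\<Phi> f) = f"
      proof (rule extensionalityI[where A = "topspace X"])
        show "\<Psi> (\<Phi> f) \<in> extensional (topspace X)" by (simp add: \<Psi>_def)
        show "f \<in> extensional (topspace X)" using f by (simp add: Q_def)
        fix x assume x: "x \<in> topspace X"
        have "f (SOME y. y \<in> connected_component_of_set X x) = f x"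
          using const[OF f compx[OF x] some[OF compx[OF x]] xin[OF x]] .
        then show "\<Psi> (\<Phi> f) x = f x" using x compx[OF x] by (simp add: \<Psi>_def \<Phi>_def)
      qed
    qed
    show "\<forall>g\<in>PiE ?C (\<lambda>_. S). \<Phi> (\<Psi> g) = g"
    proof
      fix g assume g: "g \<in> PiE ?C (\<lambda>_. S)"
      show "\<Phi> (\<Psi> g) = g"
      proof (rule extensionalityI[where A = ?C])
        show "\<Phi> (\<Psi> g) \<in> extensional ?C" by (simp add: \<Phi>_def)
        show "g \<in> extensional ?C" using g by (simp add: PiE_def)
        fix C assume C: "C \<in> ?C"
        have sx: "(SOME x. x \<in> C) \<in> topspace X"
          using some[OF C] connected_components_of_subset[OF C] by blast
        show "\<Phi> (\<Psi> g) C = g C"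
          using C sx component_eq_of_mem[OF C some[OF C]] by (simp add: \<Psi>_def \<Phi>_def)
      qed
    qed
    show "\<Phi> ` Q \<subseteq> PiE ?C (\<lambda>_. S)"
    proof
      fix h assume "h \<in> \<Phi> ` Q"
      then obtain f where f: "f \<in> Q" and h: "h = \<Phi> f" by blast
      have "f (SOME x. x \<in> C) \<in> S" if C: "C \<in> ?C" for C
      proof -
        have "(SOME x. x \<in> C) \<in> topspace X"
          using some[OF C] connected_components_of_subset[OF C] by blast
        then show ?thesis using f by (simp add: Q_def continuous_map_discrete_iff)
      qed
      then show "h \<in> PiE ?C (\<lambda>_. S)" by (simp add: h \<Phi>_def)
    qed
    show "\<Psi> ` PiE ?C (\<lambda>_. S) \<subseteq> Q"
    proof
      fix h assume "h \<in> \<Psi> ` PiE ?C (\<lambda>_. S)"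
      then obtain g where g: "g \<in> PiE ?C (\<lambda>_. S)" and h: "h = \<Psi> g" by blast
      have vals: "\<forall>x\<in>topspace X. h x \<in> S"
        using g compx by (auto simp: h \<Psi>_def)
      have opn: "openin X {x \<in> topspace X. h x \<in> U}" for U
      proof -
        have "{x \<in> topspace X. h x \<in> U} = \<Union>{C \<in> ?C. g C \<in> U}"
        proof (rule subset_antisym; rule subsetI)
          fix x assume xa: "x \<in> {x \<in> topspace X. h x \<in> U}"
          then have x: "x \<in> topspace X" by simp
          have gx: "g (connected_component_of_set X x) \<in> U"
            using xa x by (simp add: h \<Psi>_def)
          show "x \<in> \<Union>{C \<in> ?C. g C \<in> U}" using compx[OF x] xin[OF x] gx by blast
        next
          fix x assume "x \<in> \<Union>{C \<in> ?C. g C \<in> U}"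
          then obtain C where C: "C \<in> ?C" "g C \<in> U" "x \<in> C" by blast
          then have "x \<in> topspace X" using connected_components_of_subset by blast
          then show "x \<in> {x \<in> topspace X. h x \<in> U}"
            using C component_eq_of_mem[OF C(1) C(3)] by (simp add: h \<Psi>_def)
        qed
        moreover have "openin X (\<Union>{C \<in> ?C. g C \<in> U})"
          using open_in_finite_connected_components[OF fin] by (intro openin_Union) blast
        ultimately show ?thesis by simp
      qed
      show "h \<in> Q" using vals opn by (simp add: Q_def continuous_map_discrete_iff h \<Psi>_def)
    qed
  qed
  have "finite (PiE ?C (\<lambda>_. S))" using fin finS by (simp add: finite_PiE)
  moreover have "card (PiE ?C (\<lambda>_. S)) = card S ^ card ?C"
    using fin by (simp add: card_PiE)
  ultimately show ?thesis
    using bij bij_betw_finite bij_betw_same_card by metis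
qed

lemma finite_components_from_Q:
  fixes X :: "'a topology" and S :: "'b set"
  assumes finQ: "finite {f. continuous_map X (discrete_topology S) f \<and> f \<in> extensional (topspace X)}"
    and s: "s0 \<in> S" "s1 \<in> S" "s0 \<noteq> s1"
  shows "finite (connected_components_of X)"
proof -
  define Q where "Q = {f. continuous_map X (discrete_topology S) f \<and> f \<in> extensional (topspace X)}"
  define clop where "clop = {U. closedin X U \<and> openin X U}"
  define ind where "ind U = (\<lambda>x\<in>topspace X. if x \<in> U then s1 else s0)" for U
  have "ind ` clop \<subseteq> Q"
  proof
    fix h assume "h \<in> ind ` clop"
    then obtain U where U: "closedin X U" "openin X U" and h: "h = ind U" by (auto simp: clop_def)
    have Usub: "U \<subseteq> topspace X" using U openin_subset by blast
    have "openin X {x \<in> topspace X. h x \<in> V}" for V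
    proof -
      have eq: "{x \<in> topspace X. h x \<in> V} =
          (if s1 \<in> V then U else {}) \<union> (if s0 \<in> V then topspace X - U else {})"
        using Usub by (auto simp: h ind_def)
      have "openin X (topspace X - U)" using U by (simp add: openin_diff)
      then show ?thesis unfolding eq using U by auto
    qed
    moreover have "\<forall>x\<in>topspace X. h x \<in> S" using s by (simp add: h ind_def)
    ultimately show "h \<in> Q" by (simp add: Q_def continuous_map_discrete_iff h ind_def)
  qed
  moreover have "inj_on ind clop"
  proof (rule inj_onI)
    fix U V assume U: "U \<in> clop" and V: "V \<in> clop" and eq: "ind U = ind V"
    have "U \<subseteq> topspace X" "V \<subseteq> topspace X"
      using U V openin_subset by (auto simp: clop_def)
    moreover have "x \<in> U \<longleftrightarrow> x \<in> V" if "x \<in> topspace X" for x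
      using fun_cong[OF eq, of x] that s by (auto simp: ind_def split: if_splits)
    ultimately show "U = V" by blast
  qed
  ultimately have finclop: "finite clop"
  proof -
    assume sub: "ind ` clop \<subseteq> Q" and inj: "inj_on ind clop"
    have "finite Q" using finQ by (simp add: Q_def)
    then have "finite (ind ` clop)" using sub by (rule finite_subset[rotated])
    then show ?thesis using inj by (rule finite_imageD)
  qed
  define hh where "hh x = {U \<in> clop. x \<in> U}" for x
  have qc: "quasi_component_of_set X x = {y \<in> topspace X. hh y = hh x}" if "x \<in> topspace X" for x
  proof -
    have "y \<in> quasi_component_of_set X x \<longleftrightarrow> y \<in> {y \<in> topspace X. hh y = hh x}" for y
    proof -
    have "(\<forall>T. closedin X T \<and> openin X T \<longrightarrow> (x \<in> T \<longleftrightarrow> y \<in> T)) \<longleftrightarrow> hh y = hh x"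
    proof
      assume "\<forall>T. closedin X T \<and> openin X T \<longrightarrow> (x \<in> T \<longleftrightarrow> y \<in> T)"
      then show "hh y = hh x" unfolding hh_def clop_def by blast
    next
      assume e: "hh y = hh x"
      show "\<forall>T. closedin X T \<and> openin X T \<longrightarrow> (x \<in> T \<longleftrightarrow> y \<in> T)"
      proof (intro allI impI)
        fix T assume T: "closedin X T \<and> openin X T"
        have "T \<in> hh y \<longleftrightarrow> T \<in> hh x" using e by simp
        then show "x \<in> T \<longleftrightarrow> y \<in> T" using T unfolding hh_def clop_def by blast
      qed
    qed
    then show "y \<in> quasi_component_of_set X x \<longleftrightarrow> y \<in> {y \<in> topspace X. hh y = hh x}"
      using that unfolding quasi_component_of_def by blast
    qed
    then show ?thesis by blast
  qed
  have "quasi_components_of X \<subseteq> (\<lambda>F. {y \<in> topspace X. hh y = F}) ` Pow clop"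
    unfolding quasi_components_of_def
  proof (rule image_subsetI)
    fix x assume x: "x \<in> topspace X"
    have "hh x \<in> Pow clop" by (auto simp: hh_def)
    then show "quasi_component_of_set X x \<in> (\<lambda>F. {y \<in> topspace X. hh y = F}) ` Pow clop"
      using qc[OF x] by blast
  qed
  then have "finite (quasi_components_of X)"
    using finclop by (metis finite_Pow_iff finite_imageI finite_subset)
  then have "quasi_components_of X = connected_components_of X"
    using quasi_eq_connected_components_of by blast
  then show ?thesis using \<open>finite (quasi_components_of X)\<close> by simp
qed


lemma restrict_eq_iff: "(restrict f A = restrict g A) \<longleftrightarrow> (\<forall>x\<in>A. f x = g x)"
  by (metis restrict_apply' restrict_ext)

theorem proposition8p4:
  fixes G :: "('g, 'b) monoid_scheme" and T :: "'g topology"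
    and X :: "'a topology" and m k p :: nat
  assumes "topological_group G T"
    and "m \<ge> 1" and "prime p"
    and "finite (elements_of_order G p)" and "card (elements_of_order G p) = m"
    and "k \<ge> 1"
    and "tychonoff_space X" and "topspace X \<noteq> {}"
  shows "(finite (connected_components_of X) \<and> card (connected_components_of X) = k)
     \<longleftrightarrow> (finite (elements_of_order (Cp_group X G T) p) \<and>
          card (elements_of_order (Cp_group X G T) p) = (m + 1) ^ k - 1)"
proof -
  note tg = assms(1)
  have gG: "group G" and tT: "topspace T = carrier G" and HT: "Hausdorff_space T"
    using tg by (simp_all add: topological_group_def)
  interpret G: group G by (rule gG)
  define Cp where "Cp = Cp_group X G T"
  interpret Cp: group Cp unfolding Cp_def by (rule Cp_group_is_group[OF tg])
  define Op where "Op = elements_of_order G p"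
  define S where "S = {g \<in> carrier G. g [^]\<^bsub>G\<^esub> p = \<one>\<^bsub>G\<^esub>}"
  have Op_eq: "Op = {g \<in> carrier G. g [^]\<^bsub>G\<^esub> p = \<one>\<^bsub>G\<^esub> \<and> g \<noteq> \<one>\<^bsub>G\<^esub>}"
    unfolding Op_def elements_of_order_def using G.ord_prime_iff[OF assms(3)] by blast
  have S_eq: "S = insert \<one>\<^bsub>G\<^esub> Op" and oneO: "\<one>\<^bsub>G\<^esub> \<notin> Op"
    unfolding S_def Op_eq by auto
  have finO: "finite Op" and cardO: "card Op = m" using assms(4,5) by (simp_all add: Op_def)
  have finS: "finite S" and cardS: "card S = m + 1"
    using finO cardO oneO S_eq by auto
  have SsubT: "S \<subseteq> topspace T" using tT by (auto simp: S_def)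
  have subdisc: "subtopology T S = discrete_topology S"
    by (rule subtopology_eq_discrete_topology_finite[OF Hausdorff_imp_t1_space[OF HT] SsubT finS])
  define Q where "Q = {f. continuous_map X (discrete_topology S) f \<and> f \<in> extensional (topspace X)}"
  have Q_eq: "Q = {f \<in> carrier Cp. \<forall>x\<in>topspace X. f x \<in> S}"
  proof -
    have "continuous_map X (discrete_topology S) f \<longleftrightarrow>
          continuous_map X T f \<and> (\<forall>x\<in>topspace X. f x \<in> S)" for f
      unfolding subdisc[symmetric] continuous_map_in_subtopology by blast
    then show ?thesis by (auto simp: Q_def Cp_def Cp_group_def)
  qed
  have valG: "f x \<in> carrier G" if "f \<in> carrier Cp" "x \<in> topspace X" for f x
  proof -
    have "continuous_map X T f" using that(1) by (simp add: Cp_def Cp_group_def)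
    then show ?thesis using that(2) tT by (simp add: continuous_map_def Pi_iff)
  qed
  have E_eq: "elements_of_order Cp p = Q - {\<one>\<^bsub>Cp\<^esub>}"
  proof -
    have "f [^]\<^bsub>Cp\<^esub> p = \<one>\<^bsub>Cp\<^esub> \<longleftrightarrow> (\<forall>x\<in>topspace X. f x \<in> S)" if f: "f \<in> carrier Cp" for f
    proof -
      have "f \<in> extensional (topspace X)" using f by (simp add: Cp_def Cp_group_def)
      then have "f [^]\<^bsub>Cp\<^esub> p = (\<lambda>x\<in>topspace X. f x [^]\<^bsub>G\<^esub> p)"
        unfolding Cp_def by (rule Cp_pow)
      moreover have "\<one>\<^bsub>Cp\<^esub> = (\<lambda>x\<in>topspace X. \<one>\<^bsub>G\<^esub>)" by (simp add: Cp_def Cp_group_def)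
      ultimately show ?thesis using valG[OF f] by (simp add: restrict_eq_iff S_def)
    qed
    then show ?thesis unfolding Q_eq elements_of_order_def
      using Cp.ord_prime_iff[OF assms(3)] by auto
  qed
  have "\<forall>x\<in>topspace X. \<one>\<^bsub>Cp\<^esub> x \<in> S" by (simp add: Cp_def Cp_group_def S_def)
  then have oneQ: "\<one>\<^bsub>Cp\<^esub> \<in> Q"
    unfolding Q_eq using Cp.one_closed by blast
  have finE: "finite (elements_of_order Cp p) \<longleftrightarrow> finite Q" by (simp add: E_eq)
  have cardE: "card (elements_of_order Cp p) = card Q - 1"
    using oneQ by (simp add: E_eq card_Diff_singleton_if)
  have "Op \<noteq> {}" using assms(2) cardO by auto
  then obtain s1 where s1: "s1 \<in> Op" by blast
  have pos: "(m + 1) ^ n \<ge> 1" for n :: nat by simp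
  show ?thesis
    unfolding Cp_def[symmetric] finE cardE
  proof
    assume L: "finite (connected_components_of X) \<and> card (connected_components_of X) = k"
    then show "finite Q \<and> card Q - 1 = (m + 1) ^ k - 1"
      using count_finite_components[of X S] finS cardS by (simp add: Q_def)
  next
    assume R: "finite Q \<and> card Q - 1 = (m + 1) ^ k - 1"
    have fc: "finite (connected_components_of X)"
    proof (rule finite_components_from_Q[of X S "\<one>\<^bsub>G\<^esub>" s1])
      show "finite {f. continuous_map X (discrete_topology S) f \<and> f \<in> extensional (topspace X)}"
        using R by (simp add: Q_def)
      show "\<one>\<^bsub>G\<^esub> \<in> S" "s1 \<in> S" using S_eq s1 by simp_all
      show "\<one>\<^bsub>G\<^esub> \<noteq> s1" using oneO s1 by blast
    qed
    then have cQ: "card Q = (m + 1) ^ card (connected_components_of X)"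
      using count_finite_components[of X S] finS cardS by (simp add: Q_def)
    then have "(m + 1) ^ card (connected_components_of X) = (m + 1) ^ k"
      using R pos[of k] pos[of "card (connected_components_of X)"] by linarith
    then have "card (connected_components_of X) = k"
      using assms(2) by (simp add: power_inject_exp)
    then show "finite (connected_components_of X) \<and> card (connected_components_of X) = k"
      using fc by simp
  qed
qed

end
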